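(* Assume Assumption 1, Assumption 2 and the null hypothesis $H_0:\ T_i(1)=T_i(0)$ for all $i$, and condition on $\boldsymbol{T}(1),\boldsymbol{T}(0)$. Then for each $1\le k\le K$, conditional on $N_k$, the variables $D_k$ and $N_{1k}$ are independent, and $$D_k\mid\boldsymbol{T}(1),\boldsymbol{T}(0),N_k\sim\mathrm{HGeom}(n_k,d_k,N_k),\qquad N_{1k}\mid\boldsymbol{T}(1),\boldsymbol{T}(0),N_k\sim\mathrm{Bin}(N_k,\phi_k).$$
   Context: There are $n$ units. Unit $i$ has potential event times $T_i(1),T_i(0)\ge 0$, potential censoring times $C_i(1),C_i(0)\in[0,\infty]$, and treatment indicator $Z_i\in\{0,1\}$; bold letters denote $n$-vectors. Assumption 1: conditional on $\boldsymbol{T}(1),\boldsymbol{T}(0),\boldsymbol{C}(1),\boldsymbol{C}(0)$, the $Z_i$ are i.i.d. Bernoulli$(p_1)$, $p_1=1-p_0\in(0,1)$. Assumption 2: $(\boldsymbol{C}(1),\boldsymbol{C}(0))$ is independent of $(\boldsymbol{T}(1),\boldsymbol{T}(0))$ and the pairs $(C_i(1),C_i(0))$ are i.i.d. across $i$. $G_z(c)=\Pr(C_i(z)\ge c)$, $G(t)=p_1G_1(t)+p_0G_0(t)$. Realized: $W_i=\min\{T_i,C_i\}$, $\Delta_i=\mathbb{1}(T_i\le C_i)$ with $T_i=Z_iT_i(1)+(1-Z_i)T_i(0)$, $C_i=Z_iC_i(1)+(1-Z_i)C_i(0)$. Let $t_1<\dots<t_K$ be the distinct values of $\{T_i(0)\}$,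 $d_k=\#\{i:T_i(0)=t_k\}$, $n_k=\#\{i:T_i(0)\ge t_k\}$, $\phi_k=p_1G_1(t_k)/G(t_k)$; $N_{1k}=\sum_iZ_i\mathbb{1}(W_i\ge t_k)$, $N_k=\sum_i\mathbb{1}(W_i\ge t_k)$, $D_k=\sum_i\Delta_i\mathbb{1}(W_i=t_k)$. $\mathrm{HGeom}(m,k,b)$: number of successes in $b$ draws without replacement from $m$ items containing $k$ successes; $\mathrm{Bin}(m,p)$: binomial. *)

theory Defs
  imports "HOL-Probability.Probability"
begin

text \<open>Sample space: for each unit i, a triple (Z_i, (C_i(1), C_i(0))).
  Censoring times live in [0,\<infinity>], modelled as ennreal.\<close>
type_synonym outcome = "nat \<Rightarrow> bool \<times> (ennreal \<times> ennreal)"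

definition Zv :: "outcome \<Rightarrow> nat \<Rightarrow> bool" where
  "Zv \<omega> i = fst (\<omega> i)"

definition C1v :: "outcome \<Rightarrow> nat \<Rightarrow> ennreal" where
  "C1v \<omega> i = fst (snd (\<omega> i))"

definition C0v :: "outcome \<Rightarrow> nat \<Rightarrow> ennreal" where
  "C0v \<omega> i = snd (snd (\<omega> i))"

definition Tr :: "(nat \<Rightarrow> real) \<Rightarrow> (nat \<Rightarrow> real) \<Rightarrow> outcome \<Rightarrow> nat \<Rightarrow> real" where
  "Tr T1 T0 \<omega> i = (if Zv \<omega> i then T1 i else T0 i)"

definition Cr :: "outcome \<Rightarrow> nat \<Rightarrow> ennreal" where
  "Cr \<omega> i = (if Zv \<omega> i then C1v \<omega> i else C0v \<omega> i)"

definition Wr :: "(nat \<Rightarrow> real) \<Rightarrow> (nat \<Rightarrow> real) \<Rightarrow> outcome \<Rightarrow> nat \<Rightarrow> ennreal" where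
  "Wr T1 T0 \<omega> i = min (ennreal (Tr T1 T0 \<omega> i)) (Cr \<omega> i)"

definition Deltar :: "(nat \<Rightarrow> real) \<Rightarrow> (nat \<Rightarrow> real) \<Rightarrow> outcome \<Rightarrow> nat \<Rightarrow> bool" where
  "Deltar T1 T0 \<omega> i = (ennreal (Tr T1 T0 \<omega> i) \<le> Cr \<omega> i)"

text \<open>Distinct values t_1 < ... < t_K of T(0) over units 0..n-1 (1-indexed).\<close>
definition Kval :: "nat \<Rightarrow> (nat \<Rightarrow> real) \<Rightarrow> nat" where
  "Kval n T0 = card (T0 ` {..<n})"

definition tval :: "nat \<Rightarrow> (nat \<Rightarrow> real) \<Rightarrow> nat \<Rightarrow> real" where
  "tval n T0 k = sorted_list_of_set (T0 ` {..<n}) ! (k - 1)"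

definition dval :: "nat \<Rightarrow> (nat \<Rightarrow> real) \<Rightarrow> nat \<Rightarrow> nat" where
  "dval n T0 k = card {i \<in> {..<n}. T0 i = tval n T0 k}"

definition nval :: "nat \<Rightarrow> (nat \<Rightarrow> real) \<Rightarrow> nat \<Rightarrow> nat" where
  "nval n T0 k = card {i \<in> {..<n}. T0 i \<ge> tval n T0 k}"

definition G1 :: "(ennreal \<times> ennreal) measure \<Rightarrow> real \<Rightarrow> real" where
  "G1 Cd c = measure Cd {x \<in> space Cd. ennreal c \<le> fst x}"

definition G0 :: "(ennreal \<times> ennreal) measure \<Rightarrow> real \<Rightarrow> real" where
  "G0 Cd c = measure Cd {x \<in> space Cd. ennreal c \<le> snd x}"

definition Gmix :: "real \<Rightarrow> (ennreal \<times> ennreal) measure \<Rightarrow> real \<Rightarrow> real" where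
  "Gmix p1 Cd c = p1 * G1 Cd c + (1 - p1) * G0 Cd c"

definition phival :: "real \<Rightarrow> (ennreal \<times> ennreal) measure \<Rightarrow> nat \<Rightarrow> (nat \<Rightarrow> real) \<Rightarrow> nat \<Rightarrow> real" where
  "phival p1 Cd n T0 k = p1 * G1 Cd (tval n T0 k) / Gmix p1 Cd (tval n T0 k)"

definition N1k :: "nat \<Rightarrow> (nat \<Rightarrow> real) \<Rightarrow> (nat \<Rightarrow> real) \<Rightarrow> nat \<Rightarrow> outcome \<Rightarrow> nat" where
  "N1k n T1 T0 k \<omega> = card {i \<in> {..<n}. Zv \<omega> i \<and> ennreal (tval n T0 k) \<le> Wr T1 T0 \<omega> i}"

definition Nk :: "nat \<Rightarrow> (nat \<Rightarrow> real) \<Rightarrow> (nat \<Rightarrow> real) \<Rightarrow> nat \<Rightarrow> outcome \<Rightarrow> nat" where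
  "Nk n T1 T0 k \<omega> = card {i \<in> {..<n}. ennreal (tval n T0 k) \<le> Wr T1 T0 \<omega> i}"

definition Dk :: "nat \<Rightarrow> (nat \<Rightarrow> real) \<Rightarrow> (nat \<Rightarrow> real) \<Rightarrow> nat \<Rightarrow> outcome \<Rightarrow> nat" where
  "Dk n T1 T0 k \<omega> = card {i \<in> {..<n}. Deltar T1 T0 \<omega> i \<and> Wr T1 T0 \<omega> i = ennreal (tval n T0 k)}"

definition hgeom :: "nat \<Rightarrow> nat \<Rightarrow> nat \<Rightarrow> nat \<Rightarrow> real" where
  "hgeom m k b a = (if a \<le> b then real (k choose a) * real ((m - k) choose (b - a)) / real (m choose b) else 0)"

definition design :: "nat \<Rightarrow> real \<Rightarrow> (ennreal \<times> ennreal) measure \<Rightarrow> outcome measure" where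
  "design n p1 Cd = PiM {..<n} (\<lambda>_. measure_pmf (bernoulli_pmf p1) \<Otimes>\<^sub>M Cd)"

end

theory Submission
  imports Defs
begin

lemma restrict_stat_pair:
  fixes U A B :: "nat set"
  assumes "finite U" "B \<subseteq> A" "A \<subseteq> U" "G \<in> {0..1}"
  shows "map_pmf (\<lambda>f. (card {i\<in>B. f i}, card {i\<in>A-B. f i})) (Pi_pmf U False (\<lambda>_. bernoulli_pmf G))
       = pair_pmf (binomial_pmf (card B) G) (binomial_pmf (card (A-B)) G)"
proof -
  have fA: "finite A" using assms finite_subset by blast
  have fB: "finite B" using assms fA finite_subset by blast
  let ?p = "(\<lambda>_::nat. bernoulli_pmf G)"
  let ?st = "(\<lambda>f::nat\<Rightarrow>bool. (card {i\<in>B. f i}, card {i\<in>A-B. f i}))"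
  have e1: "map_pmf ?st (Pi_pmf A False ?p) = map_pmf ?st (Pi_pmf U False ?p)"
    unfolding Pi_pmf_subset[OF assms(1) assms(3), of False ?p] map_pmf_comp
    apply (intro map_pmf_cong refl)
    using assms by (simp, intro conjI arg_cong[where f=card]; blast)
  have "A = B \<union> (A - B)" using assms by blast
  hence e2: "Pi_pmf A False ?p = map_pmf (\<lambda>(f,g) x. if x \<in> B then f x else g x)
             (pair_pmf (Pi_pmf B False ?p) (Pi_pmf (A-B) False ?p))"
    using Pi_pmf_union[of B "A-B" False ?p] fA fB by auto
  have e3: "map_pmf ?st (map_pmf (\<lambda>(f,g) x. if x \<in> B then f x else g x)
             (pair_pmf (Pi_pmf B False ?p) (Pi_pmf (A-B) False ?p)))
     = map_pmf (\<lambda>(f, g). ((\<lambda>f. card {i\<in>B. f i}) f, (\<lambda>g. card {i\<in>A-B. g i}) g))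
             (pair_pmf (Pi_pmf B False ?p) (Pi_pmf (A-B) False ?p))"
    unfolding map_pmf_comp
    by (intro map_pmf_cong refl) (clarsimp, intro conjI arg_cong[where f=card]; blast)
  also have "\<dots> = pair_pmf (binomial_pmf (card B) G) (binomial_pmf (card (A-B)) G)"
    unfolding map_pair
    using binomial_pmf_altdef'[of B "card B" G False] binomial_pmf_altdef'[of "A-B" "card (A-B)" G False]
      fA fB assms by auto
  finally show ?thesis using e1 e2 by simp
qed

lemma restrict_stat_card:
  fixes U A :: "nat set"
  assumes "finite U" "A \<subseteq> U" "G \<in> {0..1}"
  shows "map_pmf (\<lambda>f. card {i\<in>A. f i}) (Pi_pmf U False (\<lambda>_. bernoulli_pmf G))
       = binomial_pmf (card A) G"
proof -
  have fA: "finite A" using assms finite_subset by blast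
  let ?p = "(\<lambda>_::nat. bernoulli_pmf G)"
  have "map_pmf (\<lambda>f. card {i\<in>A. f i}) (Pi_pmf A False ?p) = map_pmf (\<lambda>f. card {i\<in>A. f i}) (Pi_pmf U False ?p)"
    unfolding Pi_pmf_subset[OF assms(1) assms(2), of False ?p] map_pmf_comp
    apply (intro map_pmf_cong refl)
    using assms by (simp, intro conjI arg_cong[where f=card]; blast)
  then show ?thesis using binomial_pmf_altdef'[of A "card A" G False] fA assms by simp
qed

lemma arith_hyp:
  fixes G :: real and N d m a :: nat
  assumes "G \<in> {0..1}" "d \<le> N" "a \<le> m"
  shows "(real (d choose a) * G ^ a * (1 - G) ^ (d - a)) * (real ((N - d) choose (m - a)) * G ^ (m - a) * (1 - G) ^ (N - d - (m - a)))
    = (real (N choose m) * G ^ m * (1 - G) ^ (N - m)) * hgeom N d m a"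
proof (cases "a \<le> d \<and> m - a \<le> N - d")
  case True
  then have mN: "m \<le> N" using assms by linarith
  have pos: "real (N choose m) > 0" using mN by simp
  have e1: "G ^ a * G ^ (m - a) = G ^ m" using assms by (simp add: power_add[symmetric])
  have ex: "d - a + (N - d - (m - a)) = N - m" using True assms by linarith
  have e2: "(1 - G) ^ (d - a) * (1 - G) ^ (N - d - (m - a)) = (1 - G) ^ (N - m)"
    by (simp only: power_add[symmetric] ex)
  have "(real (d choose a) * G ^ a * (1 - G) ^ (d - a)) * (real ((N - d) choose (m - a)) * G ^ (m - a) * (1 - G) ^ (N - d - (m - a)))
     = real (d choose a) * real ((N - d) choose (m - a)) * (G ^ a * G ^ (m - a)) * ((1 - G) ^ (d - a) * (1 - G) ^ (N - d - (m - a)))"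
    by (simp only: mult_ac)
  also have "\<dots> = real (d choose a) * real ((N - d) choose (m - a)) * G ^ m * (1 - G) ^ (N - m)"
    by (simp only: e1 e2)
  also have "\<dots> = (real (N choose m) * G ^ m * (1 - G) ^ (N - m)) * hgeom N d m a"
    unfolding hgeom_def using pos assms(3) by (simp add: field_simps)
  finally show ?thesis .
next
  case False
  then have "(d choose a) = 0 \<or> ((N - d) choose (m - a)) = 0" by auto
  then show ?thesis unfolding hgeom_def using assms by auto
qed

lemma hyp_prob:
  fixes U A B :: "nat set"
  assumes "finite U" "B \<subseteq> A" "A \<subseteq> U" "G \<in> {0..1}"
  shows "measure_pmf.prob (Pi_pmf U False (\<lambda>_. bernoulli_pmf G)) {f. card {i\<in>A. f i} = m \<and> card {i\<in>B. f i} = a}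
   = measure_pmf.prob (Pi_pmf U False (\<lambda>_. bernoulli_pmf G)) {f. card {i\<in>A. f i} = m} * hgeom (card A) (card B) m a"
proof -
  let ?P = "Pi_pmf U False (\<lambda>_. bernoulli_pmf G)"
  let ?st = "(\<lambda>f::nat\<Rightarrow>bool. (card {i\<in>B. f i}, card {i\<in>A-B. f i}))"
  have fA: "finite A" using assms finite_subset by blast
  have fB: "finite B" using assms fA finite_subset by blast
  have split: "card {i\<in>A. f i} = card {i\<in>B. f i} + card {i\<in>A-B. f i}" for f
  proof -
    have "{i\<in>A. f i} = {i\<in>B. f i} \<union> {i\<in>A-B. f i}" using assms by blast
    moreover have "finite {i\<in>B. f i}" "finite {i\<in>A-B. f i}" using fA fB by auto
    ultimately show ?thesis by (simp add: card_Un_disjoint disjoint_iff)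
  qed
  have cA: "card (A - B) = card A - card B" using fB assms by (simp add: card_Diff_subset)
  have dA: "card B \<le> card A" using fA assms card_mono by blast
  have pm: "measure_pmf.prob ?P {f. card {i\<in>A. f i} = m} = pmf (binomial_pmf (card A) G) m"
  proof -
    have "pmf (binomial_pmf (card A) G) m = pmf (map_pmf (\<lambda>f. card {i\<in>A. f i}) ?P) m"
      using restrict_stat_card[OF assms(1) assms(3) assms(4)] by simp
    also have "\<dots> = measure_pmf.prob ?P ((\<lambda>f. card {i\<in>A. f i}) -` {m})" by (rule pmf_map)
    also have "(\<lambda>f. card {i\<in>A. f i}) -` {m} = {f. card {i\<in>A. f i} = m}" by auto
    finally show ?thesis by simp
  qed
  show ?thesis
  proof (cases "a \<le> m")
    case True
    have "{f. card {i\<in>A. f i} = m \<and> card {i\<in>B. f i} = a} = ?st -` {(a, m - a)}"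
    proof (rule set_eqI)
      fix f
      show "f \<in> {f. card {i\<in>A. f i} = m \<and> card {i\<in>B. f i} = a} \<longleftrightarrow> f \<in> ?st -` {(a, m - a)}"
        using split[of f] True apply (simp only: mem_Collect_eq vimage_singleton_eq prod.inject) by linarith
    qed
    then have "measure_pmf.prob ?P {f. card {i\<in>A. f i} = m \<and> card {i\<in>B. f i} = a}
       = pmf (map_pmf ?st ?P) (a, m - a)" by (simp add: pmf_map)
    also have "\<dots> = pmf (binomial_pmf (card B) G) a * pmf (binomial_pmf (card (A-B)) G) (m - a)"
      using restrict_stat_pair[OF assms] by (simp add: pmf_pair)
    also have "\<dots> = pmf (binomial_pmf (card A) G) m * hgeom (card A) (card B) m a"
      using assms(4) arith_hyp[OF assms(4) dA True] cA by (simp del: pmf_binomial add: pmf_binomial[OF _ _ ])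
    finally show ?thesis using pm by simp
  next
    case False
    have "{f. card {i\<in>A. f i} = m \<and> card {i\<in>B. f i} = a} = {}"
    proof (rule set_eqI)
      fix f
      show "f \<in> {f. card {i\<in>A. f i} = m \<and> card {i\<in>B. f i} = a} \<longleftrightarrow> f \<in> {}"
        apply (simp only: mem_Collect_eq empty_iff) using split[of f] False by auto
    qed
    then have "measure_pmf.prob ?P {f. card {i\<in>A. f i} = m \<and> card {i\<in>B. f i} = a} = 0"
      by (simp only: measure_empty)
    then show ?thesis unfolding hgeom_def using False by simp
  qed
qed


lemma inner_binom:
  fixes U A :: "nat set" and f :: "nat \<Rightarrow> bool"
  assumes "finite U" "A \<subseteq> U" "\<phi> \<in> {0..1}"
  shows "map_pmf (\<lambda>g. card {i\<in>A. g i \<and> f i}) (Pi_pmf U False (\<lambda>x. bernoulli_pmf (if f x then \<phi> else \<psi>)))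
     = binomial_pmf (card {i\<in>A. f i}) \<phi>"
proof -
  define R where "R = {i\<in>A. f i}"
  have RU: "R \<subseteq> U" using assms unfolding R_def by blast
  have fR: "finite R" using RU assms finite_subset by blast
  let ?p = "(\<lambda>x. bernoulli_pmf (if f x then \<phi> else \<psi>))"
  have "map_pmf (\<lambda>g. card {i\<in>R. g i}) (Pi_pmf R False ?p) = map_pmf (\<lambda>g. card {i\<in>A. g i \<and> f i}) (Pi_pmf U False ?p)"
    unfolding Pi_pmf_subset[OF assms(1) RU, of False ?p] map_pmf_comp
    apply (intro map_pmf_cong refl)
    unfolding R_def by (simp, intro arg_cong[where f=card]; blast)
  moreover have "Pi_pmf R False ?p = Pi_pmf R False (\<lambda>_. bernoulli_pmf \<phi>)"
    by (rule Pi_pmf_cong) (auto simp: R_def)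
  ultimately show ?thesis
    using binomial_pmf_altdef'[of R "card R" \<phi> False] fR assms by (simp add: R_def)
qed

definition Qp :: "real \<Rightarrow> real \<Rightarrow> real \<Rightarrow> (bool \<times> bool) pmf" where
  "Qp G \<phi> \<psi> = bind_pmf (bernoulli_pmf G) (\<lambda>r. map_pmf (\<lambda>z. (z, r)) (bernoulli_pmf (if r then \<phi> else \<psi>)))"

lemma Pi_Qp:
  fixes U :: "nat set"
  assumes "finite U"
  shows "Pi_pmf U d (\<lambda>_. Qp G \<phi> \<psi>) = bind_pmf (Pi_pmf U False (\<lambda>_. bernoulli_pmf G))
     (\<lambda>f. map_pmf (\<lambda>g x. if x \<in> U then (g x, f x) else d)
        (Pi_pmf U False (\<lambda>x. bernoulli_pmf (if f x then \<phi> else \<psi>))))"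
proof -
  have "Pi_pmf U d (\<lambda>_. Qp G \<phi> \<psi>) = bind_pmf (Pi_pmf U False (\<lambda>_. bernoulli_pmf G))
     (\<lambda>f. Pi_pmf U d (\<lambda>x. map_pmf (\<lambda>z. (z, f x)) (bernoulli_pmf (if f x then \<phi> else \<psi>))))"
    unfolding Qp_def by (rule Pi_pmf_bind[OF assms])
  also have "\<dots> = bind_pmf (Pi_pmf U False (\<lambda>_. bernoulli_pmf G))
     (\<lambda>f. map_pmf (\<lambda>g x. if x \<in> U then (g x, f x) else d)
        (Pi_pmf U False (\<lambda>x. bernoulli_pmf (if f x then \<phi> else \<psi>))))"
  proof (intro bind_pmf_cong refl)
    fix f :: "nat \<Rightarrow> bool"
    have "Pi_pmf U d (\<lambda>x. map_pmf (\<lambda>z. (z, f x)) (bernoulli_pmf (if f x then \<phi> else \<psi>)))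
       = Pi_pmf U d (\<lambda>x. bind_pmf (bernoulli_pmf (if f x then \<phi> else \<psi>)) (\<lambda>z. return_pmf (z, f x)))"
      by (simp add: map_pmf_def)
    also have "\<dots> = bind_pmf (Pi_pmf U False (\<lambda>x. bernoulli_pmf (if f x then \<phi> else \<psi>)))
        (\<lambda>g. Pi_pmf U d (\<lambda>x. return_pmf (g x, f x)))"
      by (rule Pi_pmf_bind[OF assms])
    also have "\<dots> = map_pmf (\<lambda>g x. if x \<in> U then (g x, f x) else d)
        (Pi_pmf U False (\<lambda>x. bernoulli_pmf (if f x then \<phi> else \<psi>)))"
      using assms by (simp add: map_pmf_def)
    finally show "Pi_pmf U d (\<lambda>x. map_pmf (\<lambda>z. (z, f x)) (bernoulli_pmf (if f x then \<phi> else \<psi>)))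
       = map_pmf (\<lambda>g x. if x \<in> U then (g x, f x) else d)
        (Pi_pmf U False (\<lambda>x. bernoulli_pmf (if f x then \<phi> else \<psi>)))" .
  qed
  finally show ?thesis .
qed


lemma pmf_part:
  fixes U A B :: "nat set"
  assumes U: "finite U" and BA: "B \<subseteq> A" and AU: "A \<subseteq> U"
    and G: "G \<in> {0..1}" and ph: "\<phi> \<in> {0..1}"
  shows "measure_pmf.prob (Pi_pmf U d (\<lambda>_. Qp G \<phi> \<psi>))
     {s. card {i\<in>A. snd (s i)} = m \<and> card {i\<in>B. snd (s i)} = a \<and> card {i\<in>A. fst (s i) \<and> snd (s i)} = b}
   = measure_pmf.prob (Pi_pmf U d (\<lambda>_. Qp G \<phi> \<psi>)) {s. card {i\<in>A. snd (s i)} = m}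
     * hgeom (card A) (card B) m a * pmf (binomial_pmf m \<phi>) b"
proof -
  let ?P = "Pi_pmf U d (\<lambda>_. Qp G \<phi> \<psi>)"
  let ?PG = "Pi_pmf U False (\<lambda>_. bernoulli_pmf G)"
  let ?pf = "\<lambda>f. Pi_pmf U False (\<lambda>x. bernoulli_pmf (if f x then \<phi> else \<psi>))"
  let ?h = "\<lambda>f g x. if x \<in> U then (g x, f x) else d"
  define X where "X = (\<lambda>f::nat\<Rightarrow>bool. card {i\<in>A. f i})"
  define Y where "Y = (\<lambda>f::nat\<Rightarrow>bool. card {i\<in>B. f i})"
  define st where "st = (\<lambda>s::nat\<Rightarrow>bool\<times>bool. (card {i\<in>A. snd (s i)}, card {i\<in>B. snd (s i)}, card {i\<in>A. fst (s i) \<and> snd (s i)}))"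
  have PP: "?P = bind_pmf ?PG (\<lambda>f. map_pmf (?h f) (?pf f))" by (rule Pi_Qp[OF U])
  have st_h: "st (?h f g) = (X f, Y f, card {i\<in>A. g i \<and> f i})" for f g
    unfolding st_def X_def Y_def using AU BA
    by (intro arg_cong2[where f=Pair] arg_cong[where f=card]; auto)
  have "map_pmf st ?P = bind_pmf ?PG (\<lambda>f. map_pmf (\<lambda>c. (X f, Y f, c)) (binomial_pmf (X f) \<phi>))"
    unfolding PP map_bind_pmf
  proof (intro bind_pmf_cong refl)
    fix f
    have "map_pmf st (map_pmf (?h f) (?pf f)) = map_pmf (\<lambda>c. (X f, Y f, c)) (map_pmf (\<lambda>g. card {i\<in>A. g i \<and> f i}) (?pf f))"
      unfolding map_pmf_comp by (simp add: st_h)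
    also have "\<dots> = map_pmf (\<lambda>c. (X f, Y f, c)) (binomial_pmf (X f) \<phi>)"
      unfolding X_def using inner_binom[OF U AU ph] by simp
    finally show "map_pmf st (map_pmf (?h f) (?pf f)) = map_pmf (\<lambda>c. (X f, Y f, c)) (binomial_pmf (X f) \<phi>)" .
  qed
  then have "pmf (map_pmf st ?P) (m, a, b) = measure_pmf.expectation ?PG (\<lambda>f. pmf (map_pmf (\<lambda>c. (X f, Y f, c)) (binomial_pmf (X f) \<phi>)) (m, a, b))"
    by (simp add: pmf_bind)
  also have "\<dots> = measure_pmf.expectation ?PG (\<lambda>f. indicator {f. X f = m \<and> Y f = a} f * pmf (binomial_pmf m \<phi>) b)"
  proof (intro Bochner_Integration.integral_cong refl)
    fix f
    have "(\<lambda>c. (X f, Y f, c)) -` {(m, a, b)} = (if X f = m \<and> Y f = a then {b} else {})" by auto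
    then show "pmf (map_pmf (\<lambda>c. (X f, Y f, c)) (binomial_pmf (X f) \<phi>)) (m, a, b) = indicator {f. X f = m \<and> Y f = a} f * pmf (binomial_pmf m \<phi>) b"
      by (simp add: pmf_map measure_pmf_single)
  qed
  also have "\<dots> = measure_pmf.prob ?PG {f. X f = m \<and> Y f = a} * pmf (binomial_pmf m \<phi>) b"
    by simp
  also have "\<dots> = measure_pmf.prob ?PG {f. X f = m} * hgeom (card A) (card B) m a * pmf (binomial_pmf m \<phi>) b"
    using hyp_prob[OF U BA AU G, of m a] unfolding X_def Y_def by simp
  finally have L: "measure_pmf.prob ?P (st -` {(m, a, b)}) = measure_pmf.prob ?PG {f. X f = m} * hgeom (card A) (card B) m a * pmf (binomial_pmf m \<phi>) b"
    by (simp add: pmf_map)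
  have "map_pmf (\<lambda>s. card {i\<in>A. snd (s i)}) ?P = map_pmf X ?PG"
    unfolding PP map_bind_pmf map_pmf_def[of X]
  proof (intro bind_pmf_cong refl)
    fix f
    have "map_pmf (\<lambda>s. card {i\<in>A. snd (s i)}) (map_pmf (?h f) (?pf f)) = map_pmf (\<lambda>_. X f) (?pf f)"
      unfolding map_pmf_comp o_def X_def using AU
      by (intro map_pmf_cong refl arg_cong[where f=card]) auto
    then show "map_pmf (\<lambda>s. card {i\<in>A. snd (s i)}) (map_pmf (?h f) (?pf f)) = return_pmf (X f)" by simp
  qed
  then have R: "measure_pmf.prob ?P {s. card {i\<in>A. snd (s i)} = m} = measure_pmf.prob ?PG {f. X f = m}"
    using pmf_map[of "\<lambda>s. card {i\<in>A. snd (s i)}" ?P m] pmf_map[of X ?PG m]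
    by (simp add: vimage_def)
  have "st -` {(m, a, b)} = {s. card {i\<in>A. snd (s i)} = m \<and> card {i\<in>B. snd (s i)} = a \<and> card {i\<in>A. fst (s i) \<and> snd (s i)} = b}"
    unfolding st_def by auto
  then show ?thesis using L R by simp
qed


definition Ez :: "real \<Rightarrow> bool \<Rightarrow> bool \<Rightarrow> (bool \<times> ennreal \<times> ennreal) set" where
  "Ez t z r = {z} \<times> {c. (ennreal t \<le> (if z then fst c else snd c)) = r}"

lemma Fz_eq: "{c::ennreal\<times>ennreal. (ennreal t \<le> (if z then fst c else snd c)) = r}
   = (if z then (if r then {ennreal t..} else {..<ennreal t}) \<times> UNIV else UNIV \<times> (if r then {ennreal t..} else {..<ennreal t}))"
  by (auto simp: not_le)

lemma Fz_sets:
  assumes "sets Cd = sets (borel \<Otimes>\<^sub>M borel :: (ennreal \<times> ennreal) measure)"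
  shows "{c::ennreal\<times>ennreal. (ennreal t \<le> (if z then fst c else snd c)) = r} \<in> sets Cd"
  unfolding assms Fz_eq by (auto intro!: pair_measureI)

lemma Ez_sets:
  assumes "sets Cd = sets (borel \<Otimes>\<^sub>M borel :: (ennreal \<times> ennreal) measure)"
  shows "Ez t z r \<in> sets (measure_pmf (bernoulli_pmf p) \<Otimes>\<^sub>M Cd)"
  unfolding Ez_def using Fz_sets[OF assms] by (intro pair_measureI) auto

lemma measure_Ez:
  assumes Cd: "prob_space Cd" "sets Cd = sets (borel \<Otimes>\<^sub>M borel :: (ennreal \<times> ennreal) measure)"
  shows "measure (measure_pmf (bernoulli_pmf p) \<Otimes>\<^sub>M Cd) (Ez t z r)
     = pmf (bernoulli_pmf p) z * (if z then (if r then G1 Cd t else 1 - G1 Cd t) else (if r then G0 Cd t else 1 - G0 Cd t))"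
proof -
  interpret C: prob_space Cd by (rule Cd(1))
  have spC: "space Cd = UNIV" using sets_eq_imp_space_eq[OF Cd(2)] by (simp add: space_pair_measure)
  let ?F = "{c::ennreal\<times>ennreal. (ennreal t \<le> (if z then fst c else snd c)) = r}"
  have "emeasure (measure_pmf (bernoulli_pmf p) \<Otimes>\<^sub>M Cd) ({z} \<times> ?F) = emeasure (measure_pmf (bernoulli_pmf p)) {z} * emeasure Cd ?F"
    by (rule C.emeasure_pair_measure_Times) (simp, rule Fz_sets[OF Cd(2)])
  then have "measure (measure_pmf (bernoulli_pmf p) \<Otimes>\<^sub>M Cd) ({z} \<times> ?F) = measure (measure_pmf (bernoulli_pmf p)) {z} * measure Cd ?F"
    by (simp add: Sigma_Algebra.measure_def enn2real_mult)
  moreover have "measure Cd ?F = (if z then (if r then G1 Cd t else 1 - G1 Cd t) else (if r then G0 Cd t else 1 - G0 Cd t))"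
  proof -
    have s1: "{x \<in> space Cd. ennreal t \<le> fst x} \<in> sets Cd" using Fz_sets[OF Cd(2), of t True True] by (simp add: spC)
    have s0: "{x \<in> space Cd. ennreal t \<le> snd x} \<in> sets Cd" using Fz_sets[OF Cd(2), of t False True] by (simp add: spC)
    show ?thesis
      using C.prob_compl[OF s1] C.prob_compl[OF s0] unfolding G1_def G0_def
      by (cases z; cases r) (auto simp: spC set_diff_eq)
  qed
  ultimately show ?thesis by (simp add: Ez_def measure_pmf_single)
qed


lemma design_prob:
  assumes Cd: "prob_space Cd" "sets Cd = sets (borel \<Otimes>\<^sub>M borel :: (ennreal \<times> ennreal) measure)"
    and hq: "\<And>z r. pmf q (z, r) = measure (measure_pmf (bernoulli_pmf p1) \<Otimes>\<^sub>M Cd) (Ez t z r)"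
  shows "measure (design n p1 Cd) {\<omega> \<in> space (design n p1 Cd).
            (\<lambda>i. if i \<in> {..<n} then (Zv \<omega> i, ennreal t \<le> Cr \<omega> i) else d) \<in> E}
       = measure_pmf.prob (Pi_pmf {..<n} d (\<lambda>_. q)) E"
proof -
  define M where "M = measure_pmf (bernoulli_pmf p1) \<Otimes>\<^sub>M Cd"
  define U where "U = {..<n}"
  define D where "D = design n p1 Cd"
  define S where "S = (\<lambda>\<omega>. (\<lambda>i. if i \<in> U then (Zv \<omega> i, ennreal t \<le> Cr \<omega> i) else d))"
  define SS where "SS = PiE_dflt U d (\<lambda>_. UNIV)"
  define P where "P = Pi_pmf U d (\<lambda>_. q)"
  define C where "C = (\<lambda>s. {\<omega> \<in> space D. S \<omega> = s})"
  have fU: "finite U" by (simp add: U_def)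
  interpret M: prob_space M unfolding M_def
    by (intro prob_space_pair prob_space_measure_pmf Cd(1))
  interpret PP: product_prob_space "\<lambda>_::nat. M" U
    by unfold_locales
  have DM: "D = PiM U (\<lambda>_. M)" unfolding D_def design_def M_def U_def ..
  interpret D: prob_space D unfolding DM by (intro prob_space_PiM M.prob_space_axioms)
  have spC: "space Cd = UNIV" using sets_eq_imp_space_eq[OF Cd(2)] by (simp add: space_pair_measure)
  have spM: "space M = UNIV" unfolding M_def by (simp add: space_pair_measure spC)
  have spD: "space D = PiE U (\<lambda>_. UNIV)" unfolding DM space_PiM spM ..
  have fSS: "finite SS" unfolding SS_def using fU by (intro finite_PiE_dflt) auto
  have SinSS: "S \<omega> \<in> SS" for \<omega> unfolding S_def SS_def PiE_dflt_def by auto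
  have Cs: "C s = PiE U (\<lambda>i. Ez t (fst (s i)) (snd (s i)))" if "s \<in> SS" for s
  proof (rule set_eqI)
    fix \<omega>
    show "\<omega> \<in> C s \<longleftrightarrow> \<omega> \<in> PiE U (\<lambda>i. Ez t (fst (s i)) (snd (s i)))"
      using that unfolding C_def spD S_def SS_def PiE_dflt_def Ez_def
      by (auto simp: PiE_iff fun_eq_iff Zv_def Cr_def C1v_def C0v_def prod_eq_iff mem_Times_iff split: if_splits)
  qed
  have Csets: "C s \<in> sets D" if "s \<in> SS" for s
    unfolding Cs[OF that] DM M_def using fU Ez_sets[OF Cd(2)] by (intro sets_PiM_I_finite) auto
  have Cmeas: "measure D (C s) = pmf P s" if "s \<in> SS" for s
  proof -
    have "emeasure D (C s) = (\<Prod>i\<in>U. emeasure M (Ez t (fst (s i)) (snd (s i))))"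
      unfolding Cs[OF that] DM using fU Ez_sets[OF Cd(2)] M_def
      by (intro PP.emeasure_PiM) auto
    also have "\<dots> = (\<Prod>i\<in>U. ennreal (pmf q (s i)))"
    proof (intro prod.cong refl)
      fix i
      have "pmf q (s i) = measure M (Ez t (fst (s i)) (snd (s i)))"
        using hq[folded M_def, of "fst (s i)" "snd (s i)"] by simp
      then show "emeasure M (Ez t (fst (s i)) (snd (s i))) = ennreal (pmf q (s i))"
        by (simp add: M.emeasure_eq_measure)
    qed
    also have "\<dots> = ennreal (\<Prod>i\<in>U. pmf q (s i))"
      by (simp add: prod_ennreal)
    finally have "measure D (C s) = (\<Prod>i\<in>U. pmf q (s i))"
      by (simp add: D.emeasure_eq_measure prod_nonneg)
    moreover have "pmf P s = (\<Prod>i\<in>U. pmf q (s i))"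
      unfolding P_def using fU that by (simp add: pmf_Pi SS_def PiE_dflt_def)
    ultimately show ?thesis by simp
  qed
  have un: "{\<omega> \<in> space D. S \<omega> \<in> E} = (\<Union>s\<in>E \<inter> SS. C s)"
    unfolding C_def using SinSS by auto
  have "measure D {\<omega> \<in> space D. S \<omega> \<in> E} = (\<Sum>s\<in>E \<inter> SS. measure D (C s))"
    unfolding un using fSS Csets
    by (intro D.finite_measure_finite_Union) (auto simp: disjoint_family_on_def C_def)
  also have "\<dots> = (\<Sum>s\<in>E \<inter> SS. pmf P s)" using Cmeas by simp
  also have "\<dots> = measure_pmf.prob P (E \<inter> SS)" using fSS by (simp add: measure_measure_pmf_finite)
  also have "\<dots> = measure_pmf.prob P E"
  proof -
    have "set_pmf P \<subseteq> SS" unfolding P_def SS_def using set_Pi_pmf_subset'[OF fU, of d "\<lambda>_. q"]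
      by (auto simp: PiE_dflt_def)
    then have "E \<inter> SS \<inter> set_pmf P = E \<inter> set_pmf P" by blast
    then show ?thesis using measure_Int_set_pmf[of P "E \<inter> SS"] measure_Int_set_pmf[of P E] by simp
  qed
  finally show ?thesis unfolding D_def S_def P_def U_def .
qed


lemma pmf_map_pair2: "pmf (map_pmf (\<lambda>z. (z, r')) M) (z, r) = (if r = r' then pmf M z else 0)"
proof -
  have "(\<lambda>z. (z, r')) -` {(z, r)} = (if r = r' then {z} else {})" by auto
  then show ?thesis by (simp add: pmf_map measure_pmf_single)
qed

lemma pmf_Qp:
  assumes "G \<in> {0..1}" "\<phi> \<in> {0..1}" "\<psi> \<in> {0..1}"
  shows "pmf (Qp G \<phi> \<psi>) (z, r) = (if r then G else 1 - G) * (if r then (if z then \<phi> else 1 - \<phi>) else (if z then \<psi> else 1 - \<psi>))"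
  using assms unfolding Qp_def pmf_bind
  by (cases z; cases r) (simp_all add: pmf_map_pair2)

lemma ab_facts:
  fixes p1 g1 g0 :: real
  assumes "0 < p1" "p1 < 1" "g1 \<in> {0..1}" "g0 \<in> {0..1}"
  defines "G \<equiv> p1 * g1 + (1 - p1) * g0"
  defines "\<phi> \<equiv> p1 * g1 / G" and "\<psi> \<equiv> p1 * (1 - g1) / (1 - G)"
  shows "G \<in> {0..1}" "\<phi> \<in> {0..1}" "\<psi> \<in> {0..1}" "G * \<phi> = p1 * g1" "(1 - G) * \<psi> = p1 * (1 - g1)"
proof -
  have a: "0 \<le> p1 * g1" "0 \<le> (1 - p1) * g0" "0 \<le> p1 * (1 - g1)" "0 \<le> (1 - p1) * (1 - g0)"
    using assms by auto
  have b: "p1 * g1 \<le> p1" "(1 - p1) * g0 \<le> 1 - p1" using assms by (auto intro: mult_left_le)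
  show "G \<in> {0..1}" unfolding G_def using a b by auto
  show "\<phi> \<in> {0..1}" unfolding \<phi>_def G_def using a by (auto simp: divide_le_eq_1)
  have c: "1 - G = p1 * (1 - g1) + (1 - p1) * (1 - g0)" unfolding G_def by (simp add: algebra_simps)
  show "\<psi> \<in> {0..1}" unfolding \<psi>_def c using a by (auto simp: divide_le_eq_1)
  show "G * \<phi> = p1 * g1"
  proof (cases "G = 0")
    case True then have "p1 * g1 = 0" using a unfolding G_def by linarith
    then show ?thesis using True unfolding \<phi>_def by simp
  qed (simp add: \<phi>_def)
  show "(1 - G) * \<psi> = p1 * (1 - g1)"
  proof (cases "1 - G = 0")
    case True then have "p1 * (1 - g1) = 0" using a unfolding c by linarith
    then show ?thesis using True unfolding \<psi>_def by simp
  qed (simp add: \<psi>_def)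
qed

theorem lemmaA3:
  fixes n :: nat and p1 :: real and Cd :: "(ennreal \<times> ennreal) measure"
    and T1 T0 :: "nat \<Rightarrow> real" and k :: nat
  assumes p1: "0 < p1" "p1 < 1"
    and Cd: "prob_space Cd" "sets Cd = sets (borel \<Otimes>\<^sub>M borel)"
    and Tnonneg: "\<forall>i<n. 0 \<le> T1 i \<and> 0 \<le> T0 i"
    and H0: "\<forall>i<n. T1 i = T0 i"
    and k: "1 \<le> k" "k \<le> Kval n T0"
  shows "\<forall>m a b. measure (design n p1 Cd)
            {\<omega> \<in> space (design n p1 Cd). Nk n T1 T0 k \<omega> = m \<and> Dk n T1 T0 k \<omega> = a \<and> N1k n T1 T0 k \<omega> = b}
          = measure (design n p1 Cd) {\<omega> \<in> space (design n p1 Cd). Nk n T1 T0 k \<omega> = m}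
            * hgeom (nval n T0 k) (dval n T0 k) m a
            * pmf (binomial_pmf m (phival p1 Cd n T0 k)) b"
proof (intro allI)
  fix m a b
  define t where "t = tval n T0 k"
  define U where "U = {..<n}"
  define A where "A = {i\<in>U. t \<le> T0 i}"
  define B where "B = {i\<in>U. T0 i = t}"
  define g1 where "g1 = G1 Cd t"
  define g0 where "g0 = G0 Cd t"
  define G where "G = p1 * g1 + (1 - p1) * g0"
  define \<phi> where "\<phi> = p1 * g1 / G"
  define \<psi> where "\<psi> = p1 * (1 - g1) / (1 - G)"
  define D where "D = design n p1 Cd"
  define S where "S = (\<lambda>\<omega>. (\<lambda>i. if i \<in> {..<n} then (Zv \<omega> i, ennreal t \<le> Cr \<omega> i) else (False, False)))"
  interpret C: prob_space Cd by (rule Cd(1))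
  have fU: "finite U" by (simp add: U_def)
  have AU: "A \<subseteq> U" and BA: "B \<subseteq> A" unfolding A_def B_def by auto
  have t_in: "t \<in> T0 ` U"
  proof -
    have fin: "finite (T0 ` U)" using fU by simp
    have len: "k - 1 < length (sorted_list_of_set (T0 ` {..<n}))" using k unfolding Kval_def by simp
    have "sorted_list_of_set (T0 ` {..<n}) ! (k - 1) \<in> set (sorted_list_of_set (T0 ` {..<n}))"
      by (rule nth_mem[OF len])
    then show ?thesis unfolding t_def tval_def U_def by simp
  qed
  have t0: "0 \<le> t" using t_in Tnonneg unfolding U_def by auto
  have g1r: "g1 \<in> {0..1}" unfolding g1_def G1_def by simp
  have g0r: "g0 \<in> {0..1}" unfolding g0_def G0_def by simp
  note ab = ab_facts[OF p1 g1r g0r, folded G_def, folded \<phi>_def \<psi>_def]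
  have phiv: "phival p1 Cd n T0 k = \<phi>"
    unfolding phival_def \<phi>_def G_def Gmix_def g1_def g0_def t_def ..
  have nv: "nval n T0 k = card A" unfolding nval_def A_def U_def t_def ..
  have dv: "dval n T0 k = card B" unfolding dval_def B_def U_def t_def ..
  have hq: "pmf (Qp G \<phi> \<psi>) (z, r) = measure (measure_pmf (bernoulli_pmf p1) \<Otimes>\<^sub>M Cd) (Ez t z r)" for z r
    unfolding measure_Ez[OF Cd] pmf_Qp[OF ab(1-3)] g1_def[symmetric] g0_def[symmetric]
    using ab(4,5) p1 by (cases z; cases r) (simp_all add: G_def algebra_simps)
  have W1: "(ennreal t \<le> Wr T1 T0 \<omega> i) \<longleftrightarrow> (t \<le> T0 i \<and> ennreal t \<le> Cr \<omega> i)" if "i < n" for \<omega> i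
    using that H0 Tnonneg t0 by (simp add: Wr_def Tr_def ennreal_le_iff)
  have W2: "(Deltar T1 T0 \<omega> i \<and> Wr T1 T0 \<omega> i = ennreal t) \<longleftrightarrow> (T0 i = t \<and> ennreal t \<le> Cr \<omega> i)" if "i < n" for \<omega> i
  proof -
    have T: "Tr T1 T0 \<omega> i = T0 i" using that H0 by (simp add: Tr_def)
    have "0 \<le> T0 i" using that Tnonneg by auto
    then show ?thesis unfolding Deltar_def Wr_def T using t0
      by (auto simp: min_def ennreal_inj)
  qed
  have NkS: "Nk n T1 T0 k \<omega> = card {i\<in>A. snd (S \<omega> i)}" for \<omega>
    unfolding Nk_def t_def[symmetric] using W1 unfolding S_def A_def U_def
    by (intro arg_cong[where f=card]) auto
  have DkS: "Dk n T1 T0 k \<omega> = card {i\<in>B. snd (S \<omega> i)}" for \<omega>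
    unfolding Dk_def t_def[symmetric] using W2 unfolding S_def B_def U_def
    by (intro arg_cong[where f=card]) auto
  have N1kS: "N1k n T1 T0 k \<omega> = card {i\<in>A. fst (S \<omega> i) \<and> snd (S \<omega> i)}" for \<omega>
    unfolding N1k_def t_def[symmetric] using W1 unfolding S_def A_def U_def
    by (intro arg_cong[where f=card]) (auto simp: Zv_def)
  have dp: "measure D {\<omega> \<in> space D. S \<omega> \<in> E} = measure_pmf.prob (Pi_pmf U (False, False) (\<lambda>_. Qp G \<phi> \<psi>)) E" for E
    unfolding D_def S_def U_def by (rule design_prob[OF Cd hq])
  have "measure D {\<omega> \<in> space D. Nk n T1 T0 k \<omega> = m \<and> Dk n T1 T0 k \<omega> = a \<and> N1k n T1 T0 k \<omega> = b}
      = measure D {\<omega> \<in> space D. S \<omega> \<in> {s. card {i\<in>A. snd (s i)} = m \<and> card {i\<in>B. snd (s i)} = a \<and> card {i\<in>A. fst (s i) \<and> snd (s i)} = b}}"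
    unfolding NkS DkS N1kS by simp
  also have "\<dots> = measure_pmf.prob (Pi_pmf U (False, False) (\<lambda>_. Qp G \<phi> \<psi>)) {s. card {i\<in>A. snd (s i)} = m}
     * hgeom (card A) (card B) m a * pmf (binomial_pmf m \<phi>) b"
    unfolding dp by (rule pmf_part[OF fU BA AU ab(1) ab(2)])
  also have "measure_pmf.prob (Pi_pmf U (False, False) (\<lambda>_. Qp G \<phi> \<psi>)) {s. card {i\<in>A. snd (s i)} = m}
     = measure D {\<omega> \<in> space D. S \<omega> \<in> {s. card {i\<in>A. snd (s i)} = m}}"
    unfolding dp ..
  also have "{\<omega> \<in> space D. S \<omega> \<in> {s. card {i\<in>A. snd (s i)} = m}} = {\<omega> \<in> space D. Nk n T1 T0 k \<omega> = m}"
    unfolding NkS by simp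
  finally show "measure (design n p1 Cd)
            {\<omega> \<in> space (design n p1 Cd). Nk n T1 T0 k \<omega> = m \<and> Dk n T1 T0 k \<omega> = a \<and> N1k n T1 T0 k \<omega> = b}
          = measure (design n p1 Cd) {\<omega> \<in> space (design n p1 Cd). Nk n T1 T0 k \<omega> = m}
            * hgeom (nval n T0 k) (dval n T0 k) m a
            * pmf (binomial_pmf m (phival p1 Cd n T0 k)) b"
    unfolding D_def nv dv phiv .
qed

end
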